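(* Let $G$ be a looped simple graph and $S$ a subtransversal of $W(G)$. Then $S$ is a transverse circuit of $G$ if and only if there is a looped simple graph $H$ locally equivalent to $G$ and an induced isomorphism $\beta: M[IAS(G)]\to M[IAS(H)]$ such that $\beta(S)=\zeta_H(v)$ for some vertex $v\in V(H)$.
   Context: A looped simple graph is a finite graph in which each vertex carries at most one loop and no two distinct vertices are joined by more than one edge. "Adjacent"/"neighbors" refer only to distinct vertices joined by a non-loop edge; $N_G(v)$ is the set of neighbors of $v$ (never containing $v$), and the degree of $v$ is $|N_G(v)|$ (loops are not counted). $A(G)$ is the $V(G)\times V(G)$ matrix over $GF(2)$ with diagonal entry $1$ exactly at looped vertices and off-diagonal entry $1$ exactly for adjacent pairs. $IAS(G)=(I\mid A(G)\mid A(G)+I)$ over $GF(2)$, rows indexed by $V(G)$; for $v\in V(G)$ the $v$-columns of the three blocks are labelled $\phi_G(v),\chi_G(v),\psi_G(v)$. The isotropic matroid $M[IAS(G)]$ is the binary column matroid of $IAS(G)$ on the ground set $W(G)=\{\phi_G(v),\chi_G(v),\psi_G(v):v\in V(G)\}$. The vertex triple of $v$ is $\tau_G(v)=\{\phi_G(v),\chi_G(v),\psi_G(v)\}$. A subtransversal is a subset of $W(G)$ meeting each vertex triple in at most one element; a transversal meets each in exactly one. A transverse matroid of $G$ is the restriction of $M[IAS(G)]$ to a transversal; a transverse circuit of $G$ is a circuit of $M[IAS(G)]$ that is a subtransversal. Local equivalence: $G_\ell^v$ is obtained from $G$ by complementing the loop status of $v$; $G_s^v$ by complementing the adjacency status of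 every pair of distinct neighbors of $v$; $G_{ns}^v$ by doing this and also complementing the loop status of every neighbor of $v$. $H$ is locally equivalent to $G$ if $H$ is obtained from $G$ by a finite sequence of such operations (so $V(H)=V(G)$). Induced isomorphisms: for each such operation producing $G'$ from $G$ there is a matroid isomorphism $M[IAS(G)]\to M[IAS(G')]$ sending $\alpha_G(x)\mapsto\alpha_{G'}(x)$ for all $\alpha\in\{\phi,\chi,\psi\}$, $x\in V(G)$, except: for $G'=G_\ell^v$, $\chi_G(v)\mapsto\psi_{G'}(v)$ and $\psi_G(v)\mapsto\chi_{G'}(v)$; for $G'=G_{ns}^v$ with $v$ unlooped, $\phi_G(v)\mapsto\psi_{G'}(v)$, $\psi_G(v)\mapsto\phi_{G'}(v)$, and with $v$ looped, $\phi_G(v)\mapsto\chi_{G'}(v)$, $\chi_G(v)\mapsto\phi_{G'}(v)$; for $G'=G_s^v$, the same exchange at $v$ as for $G_{ns}^v$ and, in addition, for every $w\in N_G(v)$, $\chi_G(w)\mapsto\psi_{G'}(w)$ and $\psi_G(w)\mapsto\chi_{G'}(w)$. An induced isomorphism $M[IAS(G)]\to M[IAS(H)]$, for $H$ locally equivalent to $G$, is a composition of such isomorphisms along a sequence of operations transforming $G$ into $H$. Neighborhood circuit: $\zeta_G(v)=\{\chi_G(v)\}\cup\{\phi_G(w):w\in N_G(v)\}$ if $v$ is unlooped, and $\zeta_G(v)=\{\psi_G(v)\}\cup\{\phi_G(w):w\in N_G(v)\}$ if $v$ is looped. *)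

theory Defs
  imports Main
begin

record 'a lgraph =
  verts :: "'a set"
  loops :: "'a set"
  adj   :: "'a \<Rightarrow> 'a \<Rightarrow> bool"

definition looped_simple_graph :: "('a, 'b) lgraph_scheme \<Rightarrow> bool" where
  "looped_simple_graph G \<longleftrightarrow> finite (verts G) \<and> loops G \<subseteq> verts G \<and>
     (\<forall>x y. adj G x y \<longrightarrow> x \<in> verts G \<and> y \<in> verts G \<and> x \<noteq> y) \<and>
     (\<forall>x y. adj G x y \<longrightarrow> adj G y x)"

definition nbr :: "'a lgraph \<Rightarrow> 'a \<Rightarrow> 'a set" where
  "nbr G v = {w \<in> verts G. w \<noteq> v \<and> adj G v w}"

datatype 'a elt = Phi 'a | Chi 'a | Psi 'a

fun vtx :: "'a elt \<Rightarrow> 'a" where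
  "vtx (Phi v) = v" | "vtx (Chi v) = v" | "vtx (Psi v) = v"

definition W :: "'a lgraph \<Rightarrow> 'a elt set" where
  "W G = Phi ` verts G \<union> Chi ` verts G \<union> Psi ` verts G"

definition vertex_triple :: "'a lgraph \<Rightarrow> 'a \<Rightarrow> 'a elt set" where
  "vertex_triple G v = {Phi v, Chi v, Psi v}"

(* adjacency matrix A(G) over GF(2), entries as booleans *)
definition Amat :: "'a lgraph \<Rightarrow> 'a \<Rightarrow> 'a \<Rightarrow> bool" where
  "Amat G u w = (if u = w then u \<in> loops G else adj G u w)"

(* column of IAS(G) labelled by x, entry in row u *)
fun col :: "'a lgraph \<Rightarrow> 'a elt \<Rightarrow> 'a \<Rightarrow> bool" where
  "col G (Phi v) u = (u = v)"
| "col G (Chi v) u = Amat G u v"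
| "col G (Psi v) u = (Amat G u v \<noteq> (u = v))"

definition sums_zero :: "'a lgraph \<Rightarrow> 'a elt set \<Rightarrow> bool" where
  "sums_zero G T \<longleftrightarrow> (\<forall>u \<in> verts G. even (card {x \<in> T. col G x u}))"

definition dependent_iso :: "'a lgraph \<Rightarrow> 'a elt set \<Rightarrow> bool" where
  "dependent_iso G T \<longleftrightarrow> (\<exists>T' \<subseteq> T. T' \<noteq> {} \<and> sums_zero G T')"

definition circuit_iso :: "'a lgraph \<Rightarrow> 'a elt set \<Rightarrow> bool" where
  "circuit_iso G C \<longleftrightarrow> C \<subseteq> W G \<and> dependent_iso G C \<and> (\<forall>D. D \<subset> C \<longrightarrow> \<not> dependent_iso G D)"

definition subtransversal :: "'a lgraph \<Rightarrow> 'a elt set \<Rightarrow> bool" where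
  "subtransversal G S \<longleftrightarrow> S \<subseteq> W G \<and> (\<forall>v \<in> verts G. card (S \<inter> vertex_triple G v) \<le> 1)"

definition transverse_circuit :: "'a lgraph \<Rightarrow> 'a elt set \<Rightarrow> bool" where
  "transverse_circuit G S \<longleftrightarrow> circuit_iso G S \<and> subtransversal G S"

definition zeta :: "'a lgraph \<Rightarrow> 'a \<Rightarrow> 'a elt set" where
  "zeta G v = insert (if v \<in> loops G then Psi v else Chi v) (Phi ` nbr G v)"

definition loc_l :: "'a \<Rightarrow> 'a lgraph \<Rightarrow> 'a lgraph" where
  "loc_l v G = G\<lparr>loops := (if v \<in> loops G then loops G - {v} else insert v (loops G))\<rparr>"

definition loc_s :: "'a \<Rightarrow> 'a lgraph \<Rightarrow> 'a lgraph" where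
  "loc_s v G = G\<lparr>adj := (\<lambda>x y. if x \<in> nbr G v \<and> y \<in> nbr G v \<and> x \<noteq> y
                                   then \<not> adj G x y else adj G x y)\<rparr>"

definition loc_ns :: "'a \<Rightarrow> 'a lgraph \<Rightarrow> 'a lgraph" where
  "loc_ns v G = (loc_s v G)\<lparr>loops := (loops G - nbr G v) \<union> (nbr G v - loops G)\<rparr>"

definition swap_elt :: "'a elt \<Rightarrow> 'a elt \<Rightarrow> 'a elt \<Rightarrow> 'a elt" where
  "swap_elt a b x = (if x = a then b else if x = b then a else x)"

(* induced isomorphisms of the single operations (G is the graph before the operation) *)
definition map_l :: "'a lgraph \<Rightarrow> 'a \<Rightarrow> 'a elt \<Rightarrow> 'a elt" where
  "map_l G v = swap_elt (Chi v) (Psi v)"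

definition map_ns :: "'a lgraph \<Rightarrow> 'a \<Rightarrow> 'a elt \<Rightarrow> 'a elt" where
  "map_ns G v = (if v \<in> loops G then swap_elt (Phi v) (Chi v) else swap_elt (Phi v) (Psi v))"

fun swap_chi_psi_on :: "'a set \<Rightarrow> 'a elt \<Rightarrow> 'a elt" where
  "swap_chi_psi_on N (Chi w) = (if w \<in> N then Psi w else Chi w)"
| "swap_chi_psi_on N (Psi w) = (if w \<in> N then Chi w else Psi w)"
| "swap_chi_psi_on N (Phi w) = Phi w"

definition map_s :: "'a lgraph \<Rightarrow> 'a \<Rightarrow> 'a elt \<Rightarrow> 'a elt" where
  "map_s G v = map_ns G v \<circ> swap_chi_psi_on (nbr G v)"

definition local_step :: "'a lgraph \<Rightarrow> 'a lgraph \<Rightarrow> bool" where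
  "local_step G G' \<longleftrightarrow> (\<exists>v \<in> verts G. G' = loc_l v G \<or> G' = loc_s v G \<or> G' = loc_ns v G)"

definition locally_equivalent :: "'a lgraph \<Rightarrow> 'a lgraph \<Rightarrow> bool" where
  "locally_equivalent G H \<longleftrightarrow> local_step\<^sup>*\<^sup>* G H"

inductive induced_iso :: "'a lgraph \<Rightarrow> 'a lgraph \<Rightarrow> ('a elt \<Rightarrow> 'a elt) \<Rightarrow> bool"
  for G :: "'a lgraph" where
  refl: "induced_iso G G id"
| step_l: "induced_iso G H \<beta> \<Longrightarrow> v \<in> verts H \<Longrightarrow> induced_iso G (loc_l v H) (map_l H v \<circ> \<beta>)"
| step_s: "induced_iso G H \<beta> \<Longrightarrow> v \<in> verts H \<Longrightarrow> induced_iso G (loc_s v H) (map_s H v \<circ> \<beta>)"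
| step_ns: "induced_iso G H \<beta> \<Longrightarrow> v \<in> verts H \<Longrightarrow> induced_iso G (loc_ns v H) (map_ns H v \<circ> \<beta>)"

end

theory Submission
  imports Defs
begin



lemma W_alt: "W G = {x. vtx x \<in> verts G}"
  unfolding W_def by (auto, case_tac x, auto)

lemma triple_alt: "vertex_triple G v = {x. vtx x = v}"
  unfolding vertex_triple_def by (auto, case_tac x, auto)

lemma finite_W: "finite (verts G) \<Longrightarrow> finite (W G)"
  unfolding W_def by auto

lemma card_filter_insert:
  "finite F \<Longrightarrow> a \<notin> F \<Longrightarrow> card {x \<in> insert a F. R x} =
     (if R a then Suc (card {x\<in>F. R x}) else card {x\<in>F. R x})"
proof -
  assume f: "finite F" and a: "a \<notin> F"
  show ?thesis
  proof (cases "R a")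
    case True
    then have "{x \<in> insert a F. R x} = insert a {x\<in>F. R x}" by auto
    then show ?thesis using True f a by simp
  next
    case False
    then have "{x \<in> insert a F. R x} = {x\<in>F. R x}" by auto
    then show ?thesis using False by simp
  qed
qed

lemma odd_xor: "finite T \<Longrightarrow> odd (card {x\<in>T. P x \<noteq> Q x}) =
   (odd (card {x\<in>T. P x}) \<noteq> odd (card {x\<in>T. Q x}))"
proof (induction T rule: finite_induct)
  case empty
  then show ?case by simp
next
  case (insert a F)
  show ?case
    unfolding card_filter_insert[OF insert(1,2)]
    using insert(3) by (cases "P a"; cases "Q a") auto
qed

lemma row_op:
  assumes "verts G' = verts G" "v \<in> verts G" "v \<notin> N" "inj \<beta>" "finite T"
    "\<And>x u. col G' (\<beta> x) u = (col G x u \<noteq> (u \<in> N \<and> col G x v))"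
  shows "sums_zero G' (\<beta>`T) = sums_zero G T"
proof -
  have c: "card {y \<in> \<beta>`T. col G' y u} = card {x\<in>T. col G x u \<noteq> (u\<in>N \<and> col G x v)}" for u
  proof -
    have "{y \<in> \<beta>`T. col G' y u} = \<beta> ` {x\<in>T. col G x u \<noteq> (u\<in>N \<and> col G x v)}"
      using assms(6) by auto
    then show ?thesis using assms(4) by (simp add: card_image inj_on_subset)
  qed
  have p: "odd (card {y \<in> \<beta>`T. col G' y u}) = (odd (card {x\<in>T. col G x u}) \<noteq> (u \<in> N \<and> odd (card {x\<in>T. col G x v})))" for u
    unfolding c using odd_xor[OF assms(5)] by (cases "u \<in> N") auto
  show ?thesis
    unfolding sums_zero_def assms(1)
  proof
    assume h: "\<forall>u\<in>verts G. even (card {y \<in> \<beta>`T. col G' y u})"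
    have pv: "even (card {x\<in>T. col G x v})" using h assms(2,3) p[of v] by simp
    show "\<forall>u\<in>verts G. even (card {x\<in>T. col G x u})" using h p pv by auto
  next
    assume h: "\<forall>u\<in>verts G. even (card {x\<in>T. col G x u})"
    then show "\<forall>u\<in>verts G. even (card {y \<in> \<beta>`T. col G' y u})" using p assms(2) by auto
  qed
qed

lemma Amat_l: "Amat (loc_l v G) u w = (Amat G u w \<noteq> (u = v \<and> w = v))"
  unfolding Amat_def loc_l_def by auto
lemma Amat_s: "Amat (loc_s v G) u w = (Amat G u w \<noteq> (u \<in> nbr G v \<and> w \<in> nbr G v \<and> u \<noteq> w))"
  unfolding Amat_def loc_s_def by auto
lemma Amat_ns: "Amat (loc_ns v G) u w = (Amat G u w \<noteq> (u \<in> nbr G v \<and> w \<in> nbr G v))"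
  unfolding Amat_def loc_ns_def loc_s_def by auto

lemma Amat_alt: "looped_simple_graph G \<Longrightarrow> Amat G u w = (if u = w then u \<in> loops G else u \<in> nbr G w)"
  unfolding Amat_def looped_simple_graph_def nbr_def by auto

lemma nbr_sym: "looped_simple_graph G \<Longrightarrow> u \<in> nbr G w \<longleftrightarrow> w \<in> nbr G u"
  unfolding looped_simple_graph_def nbr_def by auto

lemma nbr_not: "v \<notin> nbr G v" unfolding nbr_def by auto



lemma col_l: "col (loc_l v G) (map_l G v x) u = col G x u"
  by (cases x) (auto simp: map_l_def swap_elt_def Amat_l)

lemma col_ns: assumes "looped_simple_graph G"
  shows "col (loc_ns v G) (map_ns G v x) u = (col G x u \<noteq> (u \<in> nbr G v \<and> col G x v))"
proof -
  have s: "v \<in> nbr G w \<longleftrightarrow> w \<in> nbr G v" for w using nbr_sym[OF assms] by blast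
  note A = Amat_alt[OF assms]
  show ?thesis
  proof (cases x)
    case (Phi w)
    then show ?thesis by (cases "w = v"; cases "v \<in> loops G") 
      (auto simp add: map_ns_def swap_elt_def Amat_ns A s nbr_not)
  next
    case (Chi w)
    then show ?thesis by (cases "w = v"; cases "v \<in> loops G") 
      (auto simp add: map_ns_def swap_elt_def Amat_ns A s nbr_not)
  next
    case (Psi w)
    then show ?thesis by (cases "w = v"; cases "v \<in> loops G") 
      (auto simp add: map_ns_def swap_elt_def Amat_ns A s nbr_not)
  qed
qed

lemma col_s: assumes "looped_simple_graph G"
  shows "col (loc_s v G) (map_s G v x) u = (col G x u \<noteq> (u \<in> nbr G v \<and> col G x v))"
proof -
  have s: "v \<in> nbr G w \<longleftrightarrow> w \<in> nbr G v" for w using nbr_sym[OF assms] by blast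
  note A = Amat_alt[OF assms]
  show ?thesis
  proof (cases x)
    case (Phi w)
    then show ?thesis by (cases "w = v"; cases "v \<in> loops G"; cases "w \<in> nbr G v") 
      (auto simp add: map_s_def map_ns_def swap_elt_def Amat_s A s nbr_not)
  next
    case (Chi w)
    then show ?thesis by (cases "w = v"; cases "v \<in> loops G"; cases "w \<in> nbr G v") 
      (auto simp add: map_s_def map_ns_def swap_elt_def Amat_s A s nbr_not)
  next
    case (Psi w)
    then show ?thesis by (cases "w = v"; cases "v \<in> loops G"; cases "w \<in> nbr G v") 
      (auto simp add: map_s_def map_ns_def swap_elt_def Amat_s A s nbr_not)
  qed
qed



definition iso :: "'a lgraph \<Rightarrow> 'a lgraph \<Rightarrow> ('a elt \<Rightarrow> 'a elt) \<Rightarrow> bool" where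
 "iso G G' \<beta> \<longleftrightarrow> looped_simple_graph G' \<and> verts G' = verts G \<and> inj \<beta> \<and> (\<forall>x. vtx (\<beta> x) = vtx x)
    \<and> (\<forall>T \<subseteq> W G. sums_zero G' (\<beta>`T) = sums_zero G T)"

lemma inj_swap: "inj (swap_elt a b)"
  unfolding inj_def swap_elt_def by auto

lemma inj_swap_on: "inj (swap_chi_psi_on N)"
proof (rule injI)
  fix x y assume "swap_chi_psi_on N x = swap_chi_psi_on N y"
  then show "x = y" by (cases x; cases y) (auto split: if_splits)
qed

lemma vtx_swap_on: "vtx (swap_chi_psi_on N x) = vtx x"
  by (cases x) auto

lemma vtx_map_ns: "vtx (map_ns G v x) = vtx x"
  by (cases x) (auto simp: map_ns_def swap_elt_def)

lemma vtx_map_l: "vtx (map_l G v x) = vtx x"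
  by (cases x) (auto simp: map_l_def swap_elt_def)

lemma vtx_map_s: "vtx (map_s G v x) = vtx x"
  by (simp add: map_s_def vtx_map_ns vtx_swap_on)

lemma inj_map_ns: "inj (map_ns G v)"
  by (simp add: map_ns_def inj_swap)
lemma inj_map_l: "inj (map_l G v)"
  by (simp add: map_l_def inj_swap)
lemma inj_map_s: "inj (map_s G v)"
  by (simp add: map_s_def inj_map_ns inj_swap_on inj_compose)

lemma finite_sub_W: "looped_simple_graph G \<Longrightarrow> T \<subseteq> W G \<Longrightarrow> finite T"
  using finite_W finite_subset unfolding looped_simple_graph_def by blast

lemma nbr_verts: "nbr G v \<subseteq> verts G" unfolding nbr_def by auto

lemma lsg_l: "looped_simple_graph G \<Longrightarrow> v \<in> verts G \<Longrightarrow> looped_simple_graph (loc_l v G)"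
  unfolding looped_simple_graph_def loc_l_def by auto

lemma lsg_s: assumes "looped_simple_graph G" shows "looped_simple_graph (loc_s v G)"
proof -
  have a: "finite (verts G)" "loops G \<subseteq> verts G"
     "\<And>x y. adj G x y \<Longrightarrow> x \<in> verts G \<and> y \<in> verts G \<and> x \<noteq> y"
     "\<And>x y. adj G x y \<Longrightarrow> adj G y x"
    using assms unfolding looped_simple_graph_def by blast+
  have n: "\<And>x. x \<in> nbr G v \<Longrightarrow> x \<in> verts G" unfolding nbr_def by blast
  define N where "N = nbr G v"
  have e1: "verts (loc_s v G) = verts G" "loops (loc_s v G) = loops G"
    unfolding loc_s_def by simp_all
  have e2: "adj (loc_s v G) x y = (if x \<in> N \<and> y \<in> N \<and> x \<noteq> y then \<not> adj G x y else adj G x y)" for x y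
    unfolding loc_s_def N_def by simp
  have c3: "adj (loc_s v G) x y \<Longrightarrow> x \<in> verts G \<and> y \<in> verts G \<and> x \<noteq> y" for x y
  proof (cases "x \<in> N \<and> y \<in> N \<and> x \<noteq> y")
    case True then show ?thesis using n N_def by blast
  next
    case False
    assume "adj (loc_s v G) x y"
    then have "adj G x y" using False e2 by simp
    then show ?thesis using a(3) by blast
  qed
  have c4: "adj (loc_s v G) x y \<Longrightarrow> adj (loc_s v G) y x" for x y
    unfolding e2 using a(4) by auto
  show ?thesis unfolding looped_simple_graph_def e1 using a(1,2) c3 c4 by blast
qed

lemma lsg_ns: assumes "looped_simple_graph G" shows "looped_simple_graph (loc_ns v G)"
proof -
  have l: "looped_simple_graph (loc_s v G)" by (rule lsg_s[OF assms])
  have a: "loops G \<subseteq> verts G" using assms unfolding looped_simple_graph_def by blast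
  have n: "nbr G v \<subseteq> verts G" unfolding nbr_def by blast
  have e: "verts (loc_ns v G) = verts (loc_s v G)" "adj (loc_ns v G) = adj (loc_s v G)"
     "loops (loc_ns v G) = (loops G - nbr G v) \<union> (nbr G v - loops G)"
    unfolding loc_ns_def by simp_all
  have v: "verts (loc_s v G) = verts G" unfolding loc_s_def by simp
  show ?thesis using l a n unfolding looped_simple_graph_def e v by blast
qed

lemma iso_l: assumes G: "looped_simple_graph G" and v: "v \<in> verts G"
  shows "iso G (loc_l v G) (map_l G v)"
proof -
  have vv: "verts (loc_l v G) = verts G" by (simp add: loc_l_def)
  have s: "T \<subseteq> W G \<Longrightarrow> sums_zero (loc_l v G) (map_l G v ` T) = sums_zero G T" for T
    by (rule row_op[where N="{}", OF vv v _ inj_map_l finite_sub_W[OF G]]) (simp_all add: col_l)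
  show ?thesis unfolding iso_def using lsg_l[OF G v] vv inj_map_l vtx_map_l s by (intro conjI) auto
qed

lemma iso_ns: assumes G: "looped_simple_graph G" and v: "v \<in> verts G"
  shows "iso G (loc_ns v G) (map_ns G v)"
proof -
  have vv: "verts (loc_ns v G) = verts G" by (simp add: loc_ns_def loc_s_def)
  have s: "T \<subseteq> W G \<Longrightarrow> sums_zero (loc_ns v G) (map_ns G v ` T) = sums_zero G T" for T
    by (rule row_op[where N="nbr G v", OF vv v nbr_not inj_map_ns finite_sub_W[OF G]]) (simp_all add: col_ns[OF G])
  show ?thesis unfolding iso_def using lsg_ns[OF G] vv inj_map_ns vtx_map_ns s by (intro conjI) auto
qed

lemma iso_s: assumes G: "looped_simple_graph G" and v: "v \<in> verts G"
  shows "iso G (loc_s v G) (map_s G v)"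
proof -
  have vv: "verts (loc_s v G) = verts G" by (simp add: loc_s_def)
  have s: "T \<subseteq> W G \<Longrightarrow> sums_zero (loc_s v G) (map_s G v ` T) = sums_zero G T" for T
    by (rule row_op[where N="nbr G v", OF vv v nbr_not inj_map_s finite_sub_W[OF G]]) (simp_all add: col_s[OF G])
  show ?thesis unfolding iso_def using lsg_s[OF G] vv inj_map_s vtx_map_s s by (intro conjI) auto
qed




lemma image_W: "(\<forall>x. vtx (\<beta> x) = vtx x) \<Longrightarrow> T \<subseteq> W G \<Longrightarrow> \<beta> ` T \<subseteq> W G"
  unfolding W_alt by auto

lemma iso_refl: "looped_simple_graph G \<Longrightarrow> iso G G id"
  unfolding iso_def by auto

lemma iso_comp: assumes "iso G H \<beta>" "iso H H' \<gamma>" shows "iso G H' (\<gamma> \<circ> \<beta>)"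
proof -
  have W: "W H = W G" using assms(1) unfolding iso_def W_alt by auto
  have vb: "\<forall>x. vtx (\<beta> x) = vtx x" using assms(1) unfolding iso_def by auto
  have s: "sums_zero H' ((\<gamma> \<circ> \<beta>)`T) = sums_zero G T" if T: "T \<subseteq> W G" for T
  proof -
    have "\<beta>`T \<subseteq> W H" using image_W[OF vb T] W by simp
    then have "sums_zero H' (\<gamma>`(\<beta>`T)) = sums_zero H (\<beta>`T)" using assms(2) unfolding iso_def by auto
    also have "\<dots> = sums_zero G T" using assms(1) T unfolding iso_def by auto
    finally show ?thesis by (simp add: image_comp)
  qed
  show ?thesis
    using assms s unfolding iso_def by (auto simp: inj_compose)
qed

lemma induced_iso_iso: "induced_iso G H \<beta> \<Longrightarrow> looped_simple_graph G \<Longrightarrow> iso G H \<beta>"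
proof (induction rule: induced_iso.induct)
  case refl then show ?case by (rule iso_refl)
next
  case (step_l H \<beta> v)
  have i: "iso G H \<beta>" using step_l by simp
  have l: "looped_simple_graph H" using i unfolding iso_def by simp
  show ?case by (rule iso_comp[OF i iso_l[OF l step_l.hyps(2)]])
next
  case (step_s H \<beta> v)
  have i: "iso G H \<beta>" using step_s by simp
  have l: "looped_simple_graph H" using i unfolding iso_def by simp
  show ?case by (rule iso_comp[OF i iso_s[OF l step_s.hyps(2)]])
next
  case (step_ns H \<beta> v)
  have i: "iso G H \<beta>" using step_ns by simp
  have l: "looped_simple_graph H" using i unfolding iso_def by simp
  show ?case by (rule iso_comp[OF i iso_ns[OF l step_ns.hyps(2)]])
qed

lemma induced_iso_loceq: "induced_iso G H \<beta> \<Longrightarrow> locally_equivalent G H"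
  unfolding locally_equivalent_def
proof (induction rule: induced_iso.induct)
  case refl then show ?case by simp
next
  case (step_l H \<beta> v)
  have "local_step H (loc_l v H)" unfolding local_step_def using step_l.hyps(2) by blast
  then show ?case using step_l.IH by (rule rtranclp.rtrancl_into_rtrancl[rotated])
next
  case (step_s H \<beta> v)
  have "local_step H (loc_s v H)" unfolding local_step_def using step_s.hyps(2) by blast
  then show ?case using step_s.IH by (rule rtranclp.rtrancl_into_rtrancl[rotated])
next
  case (step_ns H \<beta> v)
  have "local_step H (loc_ns v H)" unfolding local_step_def using step_ns.hyps(2) by blast
  then show ?case using step_ns.IH by (rule rtranclp.rtrancl_into_rtrancl[rotated])
qed

lemma induced_iso_trans: "induced_iso G1 H \<beta> \<Longrightarrow> induced_iso G G1 \<gamma> \<Longrightarrow> induced_iso G H (\<beta> \<circ> \<gamma>)"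
proof (induction rule: induced_iso.induct)
  case refl then show ?case by simp
next
  case (step_l H \<beta> v)
  have "induced_iso G (loc_l v H) (map_l H v \<circ> (\<beta> \<circ> \<gamma>))"
    by (rule induced_iso.step_l[OF step_l.IH[OF step_l.prems] step_l.hyps(2)])
  then show ?case by (simp add: comp_def)
next
  case (step_s H \<beta> v)
  have "induced_iso G (loc_s v H) (map_s H v \<circ> (\<beta> \<circ> \<gamma>))"
    by (rule induced_iso.step_s[OF step_s.IH[OF step_s.prems] step_s.hyps(2)])
  then show ?case by (simp add: comp_def)
next
  case (step_ns H \<beta> v)
  have "induced_iso G (loc_ns v H) (map_ns H v \<circ> (\<beta> \<circ> \<gamma>))"
    by (rule induced_iso.step_ns[OF step_ns.IH[OF step_ns.prems] step_ns.hyps(2)])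
  then show ?case by (simp add: comp_def)
qed




lemma iso_W: "iso G G' \<beta> \<Longrightarrow> W G' = W G"
  unfolding iso_def W_alt by simp

lemma dep_transfer: assumes i: "iso G G' \<beta>" and D: "D \<subseteq> W G"
  shows "dependent_iso G' (\<beta>`D) = dependent_iso G D"
proof
  assume "dependent_iso G' (\<beta>`D)"
  then obtain T' where T': "T' \<subseteq> \<beta>`D" "T' \<noteq> {}" "sums_zero G' T'" unfolding dependent_iso_def by blast
  then obtain T0 where T0: "T0 \<subseteq> D" "T' = \<beta>`T0" by (meson subset_imageE)
  have "T0 \<subseteq> W G" using T0 D by blast
  then have "sums_zero G T0" using i T' T0 unfolding iso_def by auto
  moreover have "T0 \<noteq> {}" using T' T0 by blast
  ultimately show "dependent_iso G D" unfolding dependent_iso_def using T0 by blast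
next
  assume "dependent_iso G D"
  then obtain T0 where T0: "T0 \<subseteq> D" "T0 \<noteq> {}" "sums_zero G T0" unfolding dependent_iso_def by blast
  have "T0 \<subseteq> W G" using T0 D by blast
  then have "sums_zero G' (\<beta>`T0)" using i T0 unfolding iso_def by auto
  moreover have "\<beta>`T0 \<subseteq> \<beta>`D" "\<beta>`T0 \<noteq> {}" using T0 by auto
  ultimately show "dependent_iso G' (\<beta>`D)" unfolding dependent_iso_def by blast
qed

lemma circ_transfer: assumes i: "iso G G' \<beta>" and C: "C \<subseteq> W G"
  shows "circuit_iso G' (\<beta>`C) = circuit_iso G C"
proof -
  have inj: "inj \<beta>" and vb: "\<forall>x. vtx (\<beta> x) = vtx x" using i unfolding iso_def by auto
  have WC: "\<beta>`C \<subseteq> W G'" using image_W[OF vb C] iso_W[OF i] by simp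
  have dC: "dependent_iso G' (\<beta>`C) = dependent_iso G C" by (rule dep_transfer[OF i C])
  have m1: "(\<forall>D'. D' \<subset> \<beta>`C \<longrightarrow> \<not> dependent_iso G' D') = (\<forall>D. D \<subset> C \<longrightarrow> \<not> dependent_iso G D)"
  proof
    assume h: "\<forall>D'. D' \<subset> \<beta>`C \<longrightarrow> \<not> dependent_iso G' D'"
    show "\<forall>D. D \<subset> C \<longrightarrow> \<not> dependent_iso G D"
    proof (intro allI impI)
      fix D assume D: "D \<subset> C"
      have "\<beta>`D \<noteq> \<beta>`C" using D inj by (metis inj_image_eq_iff psubset_eq)
      then have "\<beta>`D \<subset> \<beta>`C" using D by blast
      then have "\<not> dependent_iso G' (\<beta>`D)" using h by blast
      moreover have "D \<subseteq> W G" using D C by blast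
      ultimately show "\<not> dependent_iso G D" using dep_transfer[OF i] by blast
    qed
  next
    assume h: "\<forall>D. D \<subset> C \<longrightarrow> \<not> dependent_iso G D"
    show "\<forall>D'. D' \<subset> \<beta>`C \<longrightarrow> \<not> dependent_iso G' D'"
    proof (intro allI impI)
      fix D' assume D': "D' \<subset> \<beta>`C"
      then obtain D0 where D0: "D0 \<subseteq> C" "D' = \<beta>`D0" by (meson psubset_imp_subset subset_imageE)
      have "D0 \<noteq> C" using D0 D' by blast
      then have "D0 \<subset> C" using D0 by blast
      then have "\<not> dependent_iso G D0" using h by blast
      moreover have "D0 \<subseteq> W G" using D0 C by blast
      ultimately show "\<not> dependent_iso G' D'" using dep_transfer[OF i] D0 by blast
    qed
  qed
  show ?thesis unfolding circuit_iso_def using WC C dC m1 by blast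
qed

lemma sub_transfer: assumes i: "iso G G' \<beta>" and S: "subtransversal G C"
  shows "subtransversal G' (\<beta>`C)"
proof -
  have inj: "inj \<beta>" and vb: "\<forall>x. vtx (\<beta> x) = vtx x" and vv: "verts G' = verts G"
    using i unfolding iso_def by auto
  have C: "C \<subseteq> W G" and c: "\<forall>v\<in>verts G. card (C \<inter> vertex_triple G v) \<le> 1"
    using S unfolding subtransversal_def by auto
  have WC: "\<beta>`C \<subseteq> W G'" using image_W[OF vb C] iso_W[OF i] by simp
  have e: "\<beta>`C \<inter> vertex_triple G' v = \<beta>`(C \<inter> vertex_triple G v)" for v
    unfolding triple_alt using vb by auto
  have f: "finite (vertex_triple G v)" for v unfolding vertex_triple_def by simp
  have "card (\<beta>`C \<inter> vertex_triple G' v) \<le> 1" if "v \<in> verts G'" for v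
  proof -
    have "card (\<beta>`C \<inter> vertex_triple G' v) \<le> card (C \<inter> vertex_triple G v)"
      unfolding e by (rule card_image_le) (use f in blast)
    then show ?thesis using c that vv by fastforce
  qed
  then show ?thesis unfolding subtransversal_def using WC by blast
qed

lemma tc_transfer: "iso G G' \<beta> \<Longrightarrow> transverse_circuit G C \<Longrightarrow> transverse_circuit G' (\<beta>`C)"
proof -
  assume i: "iso G G' \<beta>" and tc: "transverse_circuit G C"
  have C: "C \<subseteq> W G" and sc: "subtransversal G C" and cc: "circuit_iso G C"
    using tc unfolding transverse_circuit_def subtransversal_def by auto
  show ?thesis unfolding transverse_circuit_def
    using circ_transfer[OF i C] cc sub_transfer[OF i sc] by simp
qed

lemma circuit_sums: assumes "circuit_iso G C" shows "sums_zero G C" "C \<noteq> {}"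
proof -
  obtain T where T: "T \<subseteq> C" "T \<noteq> {}" "sums_zero G T" using assms unfolding circuit_iso_def dependent_iso_def by blast
  have "T = C"
  proof (rule ccontr)
    assume "T \<noteq> C"
    then have "T \<subset> C" using T by blast
    moreover have "dependent_iso G T" unfolding dependent_iso_def using T by blast
    ultimately show False using assms unfolding circuit_iso_def by blast
  qed
  then show "sums_zero G C" "C \<noteq> {}" using T by auto
qed

definition sig :: "'a lgraph \<Rightarrow> 'a \<Rightarrow> 'a elt" where
  "sig G v = (if v \<in> loops G then Psi v else Chi v)"

lemma zeta_sig: "zeta G v = insert (sig G v) (Phi ` nbr G v)"
  unfolding zeta_def sig_def by simp

lemma col_sig: "looped_simple_graph G \<Longrightarrow> col G (sig G v) u = (u \<in> nbr G v)"
  unfolding sig_def using nbr_not[of v G] by (auto simp: Amat_alt)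

lemma zeta_filter: assumes "looped_simple_graph G"
  shows "{t \<in> zeta G v. col G t u} = (if u \<in> nbr G v then {sig G v, Phi u} else {})"
  unfolding zeta_sig using col_sig[OF assms] by auto

lemma sig_not_phi: "sig G v \<noteq> Phi u" unfolding sig_def by simp

lemma zeta_sums: "looped_simple_graph G \<Longrightarrow> sums_zero G (zeta G v)"
  unfolding sums_zero_def zeta_filter by (simp add: sig_not_phi)

lemma zeta_W: "v \<in> verts G \<Longrightarrow> zeta G v \<subseteq> W G"
  unfolding zeta_sig W_alt sig_def using nbr_verts[of G v] by auto

lemma zeta_circuit: assumes G: "looped_simple_graph G" and v: "v \<in> verts G"
  shows "circuit_iso G (zeta G v)"
proof -
  have dep: "dependent_iso G (zeta G v)"
  proof -
    have ne: "zeta G v \<noteq> {}" unfolding zeta_def by simp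
    show ?thesis unfolding dependent_iso_def by (rule exI[of _ "zeta G v"]) (use zeta_sums[OF G] ne in simp)
  qed
  have "\<not> dependent_iso G D" if D: "D \<subset> zeta G v" for D
  proof
    assume "dependent_iso G D"
    then obtain T where T: "T \<subseteq> D" "T \<noteq> {}" "sums_zero G T" unfolding dependent_iso_def by blast
    have Tz: "T \<subseteq> zeta G v" using T D by blast
    have sT: "sig G v \<in> T"
    proof (rule ccontr)
      assume ns: "sig G v \<notin> T"
      obtain t where t: "t \<in> T" using T by blast
      then obtain u where u: "t = Phi u" "u \<in> nbr G v" using Tz ns unfolding zeta_sig by blast
      have "{x \<in> T. col G x u} = {Phi u}"
      proof
        show "{x \<in> T. col G x u} \<subseteq> {Phi u}"
        proof
          fix x assume x: "x \<in> {x \<in> T. col G x u}"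
          then obtain w where "x = Phi w" using Tz ns unfolding zeta_sig by blast
          then show "x \<in> {Phi u}" using x by simp
        qed
      qed (use t u in simp)
      moreover have "u \<in> verts G" using u nbr_verts[of G v] by blast
      then have "even (card {x \<in> T. col G x u})" using T(3) unfolding sums_zero_def by blast
      ultimately show False by simp
    qed
    have "Phi w \<in> T" if w: "w \<in> nbr G v" for w
    proof (rule ccontr)
      assume nw: "Phi w \<notin> T"
      have "{x \<in> T. col G x w} = {sig G v}"
      proof
        show "{x \<in> T. col G x w} \<subseteq> {sig G v}"
        proof
          fix x assume x: "x \<in> {x \<in> T. col G x w}"
          then have "x = sig G v \<or> (\<exists>w'. x = Phi w')" using Tz unfolding zeta_sig by blast
          then show "x \<in> {sig G v}" using x nw by auto
        qed
      qed (use sT w col_sig[OF G] in simp)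
      moreover have "w \<in> verts G" using w nbr_verts[of G v] by blast
      then have "even (card {x \<in> T. col G x w})" using T(3) unfolding sums_zero_def by blast
      ultimately show False by simp
    qed
    then have "zeta G v \<subseteq> T" using sT unfolding zeta_sig by blast
    then show False using T D by blast
  qed
  then show ?thesis unfolding circuit_iso_def using zeta_W[OF v] dep by blast
qed




definition is_phi :: "'a elt \<Rightarrow> bool" where "is_phi x \<longleftrightarrow> (\<exists>w. x = Phi w)"
definition nonphi :: "'a elt set \<Rightarrow> 'a elt set" where "nonphi S = {x\<in>S. \<not> is_phi x}"
definition special :: "'a lgraph \<Rightarrow> 'a elt \<Rightarrow> bool" where
  "special G x \<longleftrightarrow> (\<exists>w. (x = Chi w \<and> w \<notin> loops G) \<or> (x = Psi w \<and> w \<in> loops G))"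
definition Pgoal :: "'a lgraph \<Rightarrow> 'a elt set \<Rightarrow> bool" where
  "Pgoal G S \<longleftrightarrow> (\<exists>H \<beta> v. looped_simple_graph H \<and> induced_iso G H \<beta> \<and> v \<in> verts H \<and> \<beta>`S = zeta H v)"

lemma back_ns: assumes v: "v \<in> verts G" and P: "Pgoal (loc_ns v G) (map_ns G v ` S)"
  shows "Pgoal G S"
proof -
  obtain H \<beta> u where h: "looped_simple_graph H" "induced_iso (loc_ns v G) H \<beta>" "u \<in> verts H"
      "\<beta>`(map_ns G v ` S) = zeta H u"
    using P unfolding Pgoal_def by blast
  have "induced_iso G (loc_ns v G) (map_ns G v \<circ> id)"
    by (rule induced_iso.step_ns[OF induced_iso.refl v])
  then have "induced_iso G (loc_ns v G) (map_ns G v)" by simp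
  then have "induced_iso G H (\<beta> \<circ> map_ns G v)" by (rule induced_iso_trans[OF h(2)])
  moreover have "(\<beta> \<circ> map_ns G v)`S = zeta H u" using h(4) by (simp add: image_comp)
  ultimately show ?thesis unfolding Pgoal_def using h(1,3) by blast
qed

lemma no_all_phi: assumes G: "looped_simple_graph G" and c: "circuit_iso G S"
  shows "nonphi S \<noteq> {}"
proof
  assume e: "nonphi S = {}"
  have sz: "sums_zero G S" and ne: "S \<noteq> {}" using circuit_sums[OF c] by auto
  have SW: "S \<subseteq> W G" using c unfolding circuit_iso_def by simp
  obtain t where t: "t \<in> S" using ne by blast
  have ph: "\<And>x. x \<in> S \<Longrightarrow> is_phi x" using e unfolding nonphi_def by blast
  obtain u where u: "t = Phi u" using ph[OF t] unfolding is_phi_def by blast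
  have uv: "u \<in> verts G" using SW t u unfolding W_alt by auto
  have "{x \<in> S. col G x u} = {Phi u}"
  proof
    show "{x \<in> S. col G x u} \<subseteq> {Phi u}"
    proof
      fix x assume x: "x \<in> {x \<in> S. col G x u}"
      then obtain w where "x = Phi w" using ph unfolding is_phi_def by blast
      then show "x \<in> {Phi u}" using x by simp
    qed
  qed (use t u in simp)
  moreover have "even (card {x \<in> S. col G x u})" using sz uv unfolding sums_zero_def by blast
  ultimately show False by simp
qed

lemma stepA:
  fixes G :: "'a lgraph" and S :: "'a elt set"
  assumes G: "looped_simple_graph G" and tc: "transverse_circuit G S"
    and s: "s \<in> S" "\<not> is_phi s" "\<not> special G s"
    and IH: "\<And>G' (S' :: 'a elt set). card (nonphi S') < card (nonphi S) \<Longrightarrow> looped_simple_graph G' \<Longrightarrow>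
               transverse_circuit G' S' \<Longrightarrow> Pgoal G' S'"
  shows "Pgoal G S"
proof -
  have SW: "S \<subseteq> W G" and ct: "\<forall>v\<in>verts G. card (S \<inter> vertex_triple G v) \<le> 1"
    using tc unfolding transverse_circuit_def subtransversal_def by auto
  define x where "x = vtx s"
  have xv: "x \<in> verts G" using SW s(1) unfolding W_alt x_def by auto
  define m where "m = map_ns G x"
  have ms: "m s = Phi x" using s(2,3)
    by (cases s) (auto simp: m_def map_ns_def swap_elt_def is_phi_def special_def x_def)
  have other: "m t = t" if t: "t \<in> S" "t \<noteq> s" for t
  proof -
    have "vtx t \<noteq> x"
    proof
      assume tx: "vtx t = x"
      have f: "finite (S \<inter> vertex_triple G x)" unfolding vertex_triple_def by simp
      have "t \<in> S \<inter> vertex_triple G x" "s \<in> S \<inter> vertex_triple G x"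
        using t s(1) tx unfolding triple_alt x_def by auto
      moreover have "card (S \<inter> vertex_triple G x) \<le> Suc 0" using ct xv by simp
      ultimately show False using card_le_Suc0_iff_eq[OF f] t(2) by blast
    qed
    then show ?thesis by (cases t) (auto simp: m_def map_ns_def swap_elt_def)
  qed
  have fS: "finite S" by (rule finite_sub_W[OF G SW])
  have sub: "nonphi (m`S) \<subseteq> nonphi S - {s}"
  proof
    fix y assume y: "y \<in> nonphi (m`S)"
    then obtain t where t: "t \<in> S" "y = m t" "\<not> is_phi y" unfolding nonphi_def by blast
    have "t \<noteq> s" using t ms unfolding is_phi_def by blast
    then have "y = t" using other t by simp
    then show "y \<in> nonphi S - {s}" using t \<open>t \<noteq> s\<close> unfolding nonphi_def by simp
  qed
  have fn: "finite (nonphi S)" using fS unfolding nonphi_def by simp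
  have sn: "s \<in> nonphi S" using s unfolding nonphi_def by simp
  have lt: "card (nonphi (m`S)) < card (nonphi S)"
  proof -
    have "card (nonphi (m`S)) \<le> card (nonphi S - {s})" by (rule card_mono) (use fn sub in auto)
    also have "\<dots> < card (nonphi S)" by (rule card_Diff1_less[OF fn sn])
    finally show ?thesis .
  qed
  have i: "iso G (loc_ns x G) m" unfolding m_def by (rule iso_ns[OF G xv])
  have tc1: "transverse_circuit (loc_ns x G) (m`S)" by (rule tc_transfer[OF i tc])
  have l1: "looped_simple_graph (loc_ns x G)" using i unfolding iso_def by simp
  have "Pgoal (loc_ns x G) (m`S)" by (rule IH[OF lt l1 tc1])
  then show ?thesis unfolding m_def by (rule back_ns[OF xv])
qed




lemma fwd:
  fixes G :: "'a lgraph" and S :: "'a elt set"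
  shows "looped_simple_graph G \<Longrightarrow> transverse_circuit G S \<Longrightarrow> Pgoal G S"
proof (induction "card (nonphi S)" arbitrary: G S rule: less_induct)
  case less
  have G: "looped_simple_graph G" and tc: "transverse_circuit G S" using less.prems by auto
  have IH: "\<And>G' (S' :: 'a elt set). card (nonphi S') < card (nonphi S) \<Longrightarrow> looped_simple_graph G' \<Longrightarrow>
               transverse_circuit G' S' \<Longrightarrow> Pgoal G' S'" using less.hyps by blast
  have c: "circuit_iso G S" and SW: "S \<subseteq> W G" using tc unfolding transverse_circuit_def subtransversal_def by auto
  obtain s where sn: "s \<in> nonphi S" using no_all_phi[OF G c] by blast
  have s: "s \<in> S" "\<not> is_phi s" using sn unfolding nonphi_def by auto
  show ?case
  proof (cases "\<exists>s'\<in>S. \<not> is_phi s' \<and> \<not> special G s'")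
    case True
    then obtain s' where s': "s' \<in> S" "\<not> is_phi s'" "\<not> special G s'" by blast
    show ?thesis by (rule stepA[OF G tc s' IH])
  next
    case False
    then have allsp: "\<And>t. t \<in> S \<Longrightarrow> \<not> is_phi t \<Longrightarrow> special G t" by blast
    have sp: "special G s" by (rule allsp[OF s])
    define x where "x = vtx s"
    have xv: "x \<in> verts G" using SW s(1) unfolding W_alt x_def by auto
    have sx: "s = sig G x" using sp unfolding special_def sig_def x_def by auto
    show ?thesis
    proof (cases "\<forall>w\<in>nbr G x. Phi w \<in> S")
      case True
      have zs: "zeta G x \<subseteq> S" unfolding zeta_sig using True sx s(1) by blast
      have "zeta G x = S"
      proof (rule ccontr)
        assume "zeta G x \<noteq> S"
        then have "zeta G x \<subset> S" using zs by blast
        moreover have "dependent_iso G (zeta G x)"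
          using zeta_circuit[OF G xv] unfolding circuit_iso_def by blast
        ultimately show False using c unfolding circuit_iso_def by blast
      qed
      then have "id ` S = zeta G x" by simp
      then show ?thesis unfolding Pgoal_def using G induced_iso.refl xv by blast
    next
      case False
      then obtain w where w: "w \<in> nbr G x" "Phi w \<notin> S" by blast
      have wv: "w \<in> verts G" using w(1) nbr_verts[of G x] by blast
      have xw: "x \<in> nbr G w" using w(1) nbr_sym[OF G] by blast
      define m where "m = map_ns G w"
      have mt: "m t = t" if t: "t \<in> S" for t
      proof (cases "is_phi t")
        case True
        then obtain u where u: "t = Phi u" unfolding is_phi_def by blast
        then have "u \<noteq> w" using w(2) t by blast
        then show ?thesis using u by (simp add: m_def map_ns_def swap_elt_def)
      next
        case False
        then have "special G t" using allsp t by blast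
        then show ?thesis
          by (cases t) (auto simp: m_def map_ns_def swap_elt_def special_def)
      qed
      have mS: "m ` S = S"
      proof -
        have "m ` S = id ` S" by (rule image_cong) (simp_all add: mt)
        then show ?thesis by simp
      qed
      have i: "iso G (loc_ns w G) m" unfolding m_def by (rule iso_ns[OF G wv])
      have tc1: "transverse_circuit (loc_ns w G) S" using tc_transfer[OF i tc] mS by simp
      have l1: "looped_simple_graph (loc_ns w G)" using i unfolding iso_def by simp
      have lp: "loops (loc_ns w G) = (loops G - nbr G w) \<union> (nbr G w - loops G)"
        unfolding loc_ns_def by simp
      have nsp: "\<not> special (loc_ns w G) s"
        using sp xw unfolding special_def lp x_def by auto
      have "Pgoal (loc_ns w G) S" by (rule stepA[OF l1 tc1 s(1) s(2) nsp IH])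
      then have "Pgoal (loc_ns w G) (map_ns G w ` S)" using mS unfolding m_def by simp
      then show ?thesis by (rule back_ns[OF wv])
    qed
  qed
qed

theorem theorem1p2:
  fixes G :: "'a lgraph" and S :: "'a elt set"
  assumes "looped_simple_graph G"
    and "subtransversal G S"
  shows "transverse_circuit G S \<longleftrightarrow>
    (\<exists>H \<beta> v. looped_simple_graph H \<and> locally_equivalent G H \<and> induced_iso G H \<beta> \<and>
             v \<in> verts H \<and> \<beta> ` S = zeta H v)"
proof
  assume tc: "transverse_circuit G S"
  obtain H \<beta> v where h: "looped_simple_graph H" "induced_iso G H \<beta>" "v \<in> verts H" "\<beta>`S = zeta H v"
    using fwd[OF assms(1) tc] unfolding Pgoal_def by blast
  show "\<exists>H \<beta> v. looped_simple_graph H \<and> locally_equivalent G H \<and> induced_iso G H \<beta> \<and>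
             v \<in> verts H \<and> \<beta> ` S = zeta H v"
    using h induced_iso_loceq[OF h(2)] by blast
next
  assume "\<exists>H \<beta> v. looped_simple_graph H \<and> locally_equivalent G H \<and> induced_iso G H \<beta> \<and>
             v \<in> verts H \<and> \<beta> ` S = zeta H v"
  then obtain H \<beta> v where h: "looped_simple_graph H" "induced_iso G H \<beta>" "v \<in> verts H" "\<beta>`S = zeta H v"
    by blast
  have i: "iso G H \<beta>" by (rule induced_iso_iso[OF h(2) assms(1)])
  have SW: "S \<subseteq> W G" using assms(2) unfolding subtransversal_def by simp
  have "circuit_iso H (\<beta>`S)" using zeta_circuit[OF h(1) h(3)] h(4) by simp
  then have "circuit_iso G S" using circ_transfer[OF i SW] by simp
  then show "transverse_circuit G S" unfolding transverse_circuit_def using assms(2) by simp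
qed


end
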